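(* Let ${\bf T}$ be a string of length $N$ over an integer alphabet whose last character ${\bf T}[N]$ is strictly smaller than every other character of ${\bf T}$, and set ${\bf T}[N+1]$ to be a symbol different from all characters of ${\bf T}$. Let $2\le i\le N$ and $t={\bf T}[i]$, and suppose that $\mathrm{suf}(i)$ is either the lexicographically largest L-suffix among all L-suffixes starting with character $t$, or the lexicographically smallest LMS-suffix among all LMS-suffixes starting with character $t$. Then ${\bf T}[i-1]\neq t$. Moreover, with $j=\lfloor i/2\rfloor$, the position $i$ is determined by $j$ and $t$ as follows: if ${\bf T}[2j]\neq {\bf T}[2j+1]$ then $i$ is the unique element of $\{2j,2j+1\}$ with ${\bf T}[i]=t$; otherwise $i=2j$.
   Context: For $1\le i\le N$, $\mathrm{suf}(i)={\bf T}[i\dots N]$. The suffix $\mathrm{suf}(i)$ is an S-suffix if $i=N$ or $\mathrm{suf}(i)$ is lexicographically smaller than $\mathrm{suf}(i+1)$; otherwise it is an L-suffix. An S-suffix $\mathrm{suf}(i)$ is an LMS-suffix if $i>1$ and $\mathrm{suf}(i-1)$ is an L-suffix. *)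

theory Defs
  imports Main
begin

text \<open>Strings are int lists, indexed 1-based: chr T k = T[k] for 1 <= k <= N = length T.
  Position N+1 (and beyond) holds a sentinel s, assumed distinct from all characters of T.\<close>

definition chr :: "int list \<Rightarrow> int \<Rightarrow> nat \<Rightarrow> int" where
  "chr T s k = (if 1 \<le> k \<and> k \<le> length T then T ! (k - 1) else s)"

definition suf :: "int list \<Rightarrow> nat \<Rightarrow> int list" where
  "suf T i = drop (i - 1) T"

text \<open>Strict lexicographic order on strings (a proper prefix is smaller).\<close>
definition lex_less :: "int list \<Rightarrow> int list \<Rightarrow> bool" where
  "lex_less xs ys \<longleftrightarrow> (xs, ys) \<in> lexord {(a, b). a < b}"

definition lex_le :: "int list \<Rightarrow> int list \<Rightarrow> bool" where
  "lex_le xs ys \<longleftrightarrow> xs = ys \<or> lex_less xs ys"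

definition S_suffix :: "int list \<Rightarrow> nat \<Rightarrow> bool" where
  "S_suffix T i \<longleftrightarrow> i = length T \<or> lex_less (suf T i) (suf T (i + 1))"

definition L_suffix :: "int list \<Rightarrow> nat \<Rightarrow> bool" where
  "L_suffix T i \<longleftrightarrow> \<not> S_suffix T i"

definition LMS_suffix :: "int list \<Rightarrow> nat \<Rightarrow> bool" where
  "LMS_suffix T i \<longleftrightarrow> S_suffix T i \<and> i > 1 \<and> L_suffix T (i - 1)"

end

theory Submission
  imports Defs
begin

lemma suf_cons: "1 \<le> k \<Longrightarrow> k \<le> length T \<Longrightarrow> suf T k = chr T s k # suf T (k+1)"
proof -
  assume a: "1 \<le> k" "k \<le> length T"
  then have "drop (k-1) T = T ! (k-1) # drop (Suc (k-1)) T" by (intro Cons_nth_drop_Suc[symmetric]) simp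
  then show ?thesis using a by (simp add: suf_def chr_def)
qed

lemma lex_cons: "lex_less (a # x) (a # y) = lex_less x y"
  unfolding lex_less_def by simp

lemma part1:
  fixes T :: "int list" and s :: int and i :: nat and t :: int
  defines "N \<equiv> length T"
  assumes last_min: "N \<ge> 1" "\<forall>k. 1 \<le> k \<and> k < N \<longrightarrow> chr T s N < chr T s k"
    and i_range: "2 \<le> i" "i \<le> N"
    and t_def: "t = chr T s i"
    and extremal:
      "(L_suffix T i \<and> (\<forall>k. 1 \<le> k \<and> k \<le> N \<and> L_suffix T k \<and> chr T s k = t
                              \<longrightarrow> lex_le (suf T k) (suf T i)))
     \<or> (LMS_suffix T i \<and> (\<forall>k. 1 \<le> k \<and> k \<le> N \<and> LMS_suffix T k \<and> chr T s k = t
                              \<longrightarrow> lex_le (suf T i) (suf T k)))"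
  shows "chr T s (i - 1) \<noteq> t"
proof
  assume eq: "chr T s (i - 1) = t"
  have iN: "i \<noteq> N"
  proof
    assume "i = N"
    moreover have "chr T s N < chr T s (i-1)" using last_min(2) \<open>i = N\<close> i_range by auto
    ultimately show False using eq t_def by simp
  qed
  have s1: "suf T (i-1) = t # suf T i" using suf_cons[of "i-1" T s] eq i_range N_def by simp
  have s2: "suf T i = t # suf T (i+1)" using suf_cons[of i T s] t_def i_range N_def by simp
  have key: "lex_less (suf T (i-1)) (suf T i) = lex_less (suf T i) (suf T (i+1))"
    using s1 s2 lex_cons by metis
  have i1: "i - 1 + 1 = i" using i_range by simp
  have Si: "S_suffix T (i-1) = S_suffix T i"
    unfolding S_suffix_def using key iN i1 i_range N_def by auto
  show False
    using extremal
  proof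
    assume A: "L_suffix T i \<and> (\<forall>k. 1 \<le> k \<and> k \<le> N \<and> L_suffix T k \<and> chr T s k = t
                              \<longrightarrow> lex_le (suf T k) (suf T i))"
    then have "L_suffix T (i-1)" using Si unfolding L_suffix_def by simp
    then have "lex_le (suf T (i-1)) (suf T i)" using A[THEN conjunct2, rule_format, of "i-1"] eq i_range by linarith
    moreover have "suf T (i-1) \<noteq> suf T i" using s1 s2 by (metis length_Cons n_not_Suc_n)
    ultimately have "lex_less (suf T i) (suf T (i+1))" using key unfolding lex_le_def by simp
    then show False using A unfolding L_suffix_def S_suffix_def by simp
  next
    assume A: "LMS_suffix T i \<and> (\<forall>k. 1 \<le> k \<and> k \<le> N \<and> LMS_suffix T k \<and> chr T s k = t
                              \<longrightarrow> lex_le (suf T i) (suf T k))"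
    then show False using Si unfolding LMS_suffix_def L_suffix_def by simp
  qed
qed

theorem mainTheorem4:
  fixes T :: "int list" and s :: int and i :: nat and t :: int
  defines "N \<equiv> length T"
  assumes last_min: "N \<ge> 1" "\<forall>k. 1 \<le> k \<and> k < N \<longrightarrow> chr T s N < chr T s k"
    and sentinel: "s \<notin> set T"
    and i_range: "2 \<le> i" "i \<le> N"
    and t_def: "t = chr T s i"
    and extremal:
      "(L_suffix T i \<and> (\<forall>k. 1 \<le> k \<and> k \<le> N \<and> L_suffix T k \<and> chr T s k = t
                              \<longrightarrow> lex_le (suf T k) (suf T i)))
     \<or> (LMS_suffix T i \<and> (\<forall>k. 1 \<le> k \<and> k \<le> N \<and> LMS_suffix T k \<and> chr T s k = t
                              \<longrightarrow> lex_le (suf T i) (suf T k)))"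
  shows "chr T s (i - 1) \<noteq> t \<and>
    (let j = i div 2 in
      (chr T s (2 * j) \<noteq> chr T s (2 * j + 1)
         \<longrightarrow> i = (THE k. k \<in> {2 * j, 2 * j + 1} \<and> chr T s k = t)) \<and>
      (chr T s (2 * j) = chr T s (2 * j + 1) \<longrightarrow> i = 2 * j))"
proof -
  have p1: "chr T s (i - 1) \<noteq> t"
    using part1[OF last_min[unfolded N_def] i_range[unfolded N_def] t_def extremal[unfolded N_def]] .
  define j where "j = i div 2"
  have ij: "i = 2*j \<or> i = 2*j+1" unfolding j_def by auto
  have A: "chr T s (2 * j) \<noteq> chr T s (2 * j + 1) \<longrightarrow> i = (THE k. k \<in> {2 * j, 2 * j + 1} \<and> chr T s k = t)"
  proof
    assume ne: "chr T s (2 * j) \<noteq> chr T s (2 * j + 1)"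
    show "i = (THE k. k \<in> {2 * j, 2 * j + 1} \<and> chr T s k = t)"
      by (rule sym, rule the_equality) (use ij ne t_def in auto)
  qed
  have B: "chr T s (2 * j) = chr T s (2 * j + 1) \<longrightarrow> i = 2 * j"
    using ij p1 t_def by auto
  show ?thesis using p1 A B unfolding j_def Let_def by blast
qed

end
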